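(* An $L$-layer linear attention model with $H$ heads, dimension $d$ and precision $p$ cannot solve the function evaluation task $\mathsf{Eva}$ on $[n]$ whenever $LHd(d+1)p<n\log n$. On the other hand, a single-layer full attention Transformer solves $\mathsf{Eva}$ with $Hdp=O(\mathrm{poly}\log n)$. The same lower bound holds for linear attention with chain-of-thought.
   Context: Function evaluation $\mathsf{Eva}(f,x)$: the input is a function $f:[n]\to[n]$, given as $n$ tokens encoding $f(1),\dots,f(n)$, followed by one token encoding $x\in[n]$. The required output is $f(x)$. Linear attention layer: head $h$ outputs $y_i=\sum_{j\le i}\alpha_{i,j}Vx_j$ with $\alpha_{i,j}=\varphi(Qx_i)^\top\varphi(Kx_j)/\sum_{j'\le i}\varphi(Qx_i)^\top\varphi(Kx_{j'})$ for an arbitrary $\varphi:\mathbb{R}^d\to\mathbb{R}^d$. Here $Q,K,V\in\mathbb{R}^{d\times dH}$ have $p$-bit entries, the $H$ head outputs are concatenated, and each layer is followed by an arbitrary position-wise MLP map. Full attention is defined in the same way, with softmax weights $\alpha_{i,j}\propto\exp(\langle Qx_i,Kx_j\rangle)$. All quantities use $p$-bit precision. With chain-of-thought (CoT), the model, after reading the input, autoregressively generates additional tokens (each generated token is appended as a new input position), and the answer is read from the generated tokens. *)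

theory Defs
  imports Complex_Main
begin

type_synonym vec = "nat \<Rightarrow> real"   (* vectors; only indices < d are meaningful *)
type_synonym mat = "nat \<Rightarrow> nat \<Rightarrow> real"

definition prec_scheme :: "nat \<Rightarrow> real set \<Rightarrow> (real \<Rightarrow> real) \<Rightarrow> bool" where
  "prec_scheme p P rnd \<longleftrightarrow> finite P \<and> card P \<le> 2 ^ p \<and> (\<forall>x. rnd x \<in> P) \<and> (\<forall>x\<in>P. rnd x = x)"

text \<open>Concrete p-bit signed fixed point (p div 2 fractional bits), round-to-nearest with saturation.\<close>
definition fx_rnd :: "nat \<Rightarrow> real \<Rightarrow> real" where
  "fx_rnd p x = (let M = (2::int) ^ (p - 1) - 1; m = round (x * 2 ^ (p div 2))
                 in real_of_int (max (- M) (min M m)) / 2 ^ (p div 2))"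

definition fx_set :: "nat \<Rightarrow> real set" where
  "fx_set p = range (fx_rnd p)"

definition rvec :: "(real \<Rightarrow> real) \<Rightarrow> nat \<Rightarrow> vec \<Rightarrow> vec" where
  "rvec rnd d v = (\<lambda>k. if k < d then rnd (v k) else 0)"

definition mv :: "(real \<Rightarrow> real) \<Rightarrow> nat \<Rightarrow> mat \<Rightarrow> vec \<Rightarrow> vec" where
  "mv rnd d A v = rvec rnd d (\<lambda>a. \<Sum>b<d. A a b * v b)"

text \<open>Linear attention in recurrent form: S_j = sum of phi(K x) (V x)^T, z_j = sum of phi(K x),
each kept in p-bit precision.\<close>
fun lin_S :: "(real \<Rightarrow> real) \<Rightarrow> nat \<Rightarrow> (nat \<Rightarrow> vec) \<Rightarrow> (nat \<Rightarrow> vec) \<Rightarrow> nat \<Rightarrow> mat" where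
  "lin_S rnd d fk vv 0 = (\<lambda>a b. 0)"
| "lin_S rnd d fk vv (Suc j) = (\<lambda>a b. if a < d \<and> b < d
       then rnd (lin_S rnd d fk vv j a b + rnd (fk j a * vv j b)) else 0)"

fun lin_z :: "(real \<Rightarrow> real) \<Rightarrow> nat \<Rightarrow> (nat \<Rightarrow> vec) \<Rightarrow> nat \<Rightarrow> vec" where
  "lin_z rnd d fk 0 = (\<lambda>a. 0)"
| "lin_z rnd d fk (Suc j) = rvec rnd d (\<lambda>a. lin_z rnd d fk j a + fk j a)"

text \<open>Linear attention head: input representations X (position \<Rightarrow> vector), output at position i
(positions are 0-based, causal: j \<le> i).\<close>
definition lin_head :: "(real \<Rightarrow> real) \<Rightarrow> nat \<Rightarrow> mat \<Rightarrow> mat \<Rightarrow> mat \<Rightarrow> (vec \<Rightarrow> vec)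
                         \<Rightarrow> (nat \<Rightarrow> vec) \<Rightarrow> nat \<Rightarrow> vec" where
  "lin_head rnd d Q K V phi X i =
    (let fk = (\<lambda>j. rvec rnd d (phi (mv rnd d K (X j))));
         vv = (\<lambda>j. mv rnd d V (X j));
         fq = rvec rnd d (phi (mv rnd d Q (X i)));
         S = lin_S rnd d fk vv (Suc i);
         z = lin_z rnd d fk (Suc i);
         den = rnd (\<Sum>a<d. fq a * z a)
     in rvec rnd d (\<lambda>b. rnd (\<Sum>a<d. fq a * S a b) / den))"

definition sm_head :: "(real \<Rightarrow> real) \<Rightarrow> nat \<Rightarrow> mat \<Rightarrow> mat \<Rightarrow> mat
                        \<Rightarrow> (nat \<Rightarrow> vec) \<Rightarrow> nat \<Rightarrow> vec" where
  "sm_head rnd d Q K V X i =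
    (let q = mv rnd d Q (X i);
         s = (\<lambda>j. rnd (\<Sum>a<d. q a * mv rnd d K (X j) a));
         Zs = (\<Sum>j\<le>i. exp (s j));
         w = (\<lambda>j. rnd (exp (s j) / Zs))
     in rvec rnd d (\<lambda>b. \<Sum>j\<le>i. w j * mv rnd d V (X j) b))"

text \<open>One layer: H heads (hds h), outputs concatenated (dimension d*H), then an arbitrary
position-wise map F to dimension d.\<close>
definition tlayer :: "(real \<Rightarrow> real) \<Rightarrow> nat \<Rightarrow> nat \<Rightarrow> (nat \<Rightarrow> (nat \<Rightarrow> vec) \<Rightarrow> nat \<Rightarrow> vec)
                       \<Rightarrow> (vec \<Rightarrow> vec) \<Rightarrow> (nat \<Rightarrow> vec) \<Rightarrow> nat \<Rightarrow> vec" where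
  "tlayer rnd d H hds F X i =
     rvec rnd d (F (\<lambda>k. if k < d * H then hds (k div d) X i (k mod d) else 0))"

fun reps :: "(real \<Rightarrow> real) \<Rightarrow> nat \<Rightarrow> nat \<Rightarrow> (nat \<Rightarrow> nat \<Rightarrow> (nat \<Rightarrow> vec) \<Rightarrow> nat \<Rightarrow> vec)
              \<Rightarrow> (nat \<Rightarrow> vec \<Rightarrow> vec) \<Rightarrow> (nat \<Rightarrow> vec) \<Rightarrow> nat \<Rightarrow> (nat \<Rightarrow> vec)" where
  "reps rnd d H hds mlp X0 0 = X0"
| "reps rnd d H hds mlp X0 (Suc l) = tlayer rnd d H (hds l) (mlp l) (reps rnd d H hds mlp X0 l)"

definition embed :: "(real \<Rightarrow> real) \<Rightarrow> nat \<Rightarrow> (nat \<Rightarrow> nat \<Rightarrow> vec) \<Rightarrow> nat list \<Rightarrow> nat \<Rightarrow> vec" where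
  "embed rnd d emb xs = (\<lambda>i. rvec rnd d (emb i (xs ! i)))"

definition next_tok :: "(real \<Rightarrow> real) \<Rightarrow> nat \<Rightarrow> nat \<Rightarrow> nat
      \<Rightarrow> (nat \<Rightarrow> nat \<Rightarrow> (nat \<Rightarrow> vec) \<Rightarrow> nat \<Rightarrow> vec) \<Rightarrow> (nat \<Rightarrow> vec \<Rightarrow> vec)
      \<Rightarrow> (nat \<Rightarrow> nat \<Rightarrow> vec) \<Rightarrow> (vec \<Rightarrow> nat) \<Rightarrow> nat list \<Rightarrow> nat" where
  "next_tok rnd d L H hds mlp emb dec xs =
     dec (reps rnd d H hds mlp (embed rnd d emb xs) L (length xs - 1))"

definition lin_model :: "(real \<Rightarrow> real) \<Rightarrow> nat \<Rightarrow> nat \<Rightarrow> nat \<Rightarrow> (nat \<Rightarrow> nat \<Rightarrow> vec)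
      \<Rightarrow> (nat \<Rightarrow> nat \<Rightarrow> mat) \<Rightarrow> (nat \<Rightarrow> nat \<Rightarrow> mat) \<Rightarrow> (nat \<Rightarrow> nat \<Rightarrow> mat)
      \<Rightarrow> (nat \<Rightarrow> nat \<Rightarrow> vec \<Rightarrow> vec) \<Rightarrow> (nat \<Rightarrow> vec \<Rightarrow> vec) \<Rightarrow> (vec \<Rightarrow> nat) \<Rightarrow> nat list \<Rightarrow> nat" where
  "lin_model rnd d L H emb Q K V phi mlp dec =
     next_tok rnd d L H (\<lambda>l h. lin_head rnd d (Q l h) (K l h) (V l h) (phi l h)) mlp emb dec"

definition sm_model :: "(real \<Rightarrow> real) \<Rightarrow> nat \<Rightarrow> nat \<Rightarrow> nat \<Rightarrow> (nat \<Rightarrow> nat \<Rightarrow> vec)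
      \<Rightarrow> (nat \<Rightarrow> nat \<Rightarrow> mat) \<Rightarrow> (nat \<Rightarrow> nat \<Rightarrow> mat) \<Rightarrow> (nat \<Rightarrow> nat \<Rightarrow> mat)
      \<Rightarrow> (nat \<Rightarrow> vec \<Rightarrow> vec) \<Rightarrow> (vec \<Rightarrow> nat) \<Rightarrow> nat list \<Rightarrow> nat" where
  "sm_model rnd d L H emb Q K V mlp dec =
     next_tok rnd d L H (\<lambda>l h. sm_head rnd d (Q l h) (K l h) (V l h)) mlp emb dec"

definition weights_in :: "real set \<Rightarrow> nat \<Rightarrow> nat \<Rightarrow> nat \<Rightarrow> (nat \<Rightarrow> nat \<Rightarrow> mat) \<Rightarrow> bool" where
  "weights_in P L H d W \<longleftrightarrow> (\<forall>l<L. \<forall>h<H. \<forall>a<d. \<forall>b<d. W l h a b \<in> P)"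

fun cot_gen :: "(nat list \<Rightarrow> nat) \<Rightarrow> nat \<Rightarrow> nat list \<Rightarrow> nat list" where
  "cot_gen nt 0 xs = xs"
| "cot_gen nt (Suc t) xs = (let ys = cot_gen nt t xs in ys @ [nt ys])"

definition eva_input :: "nat \<Rightarrow> (nat \<Rightarrow> nat) \<Rightarrow> nat \<Rightarrow> nat list" where
  "eva_input n f x = map f [1..<Suc n] @ [x]"

definition is_fun_n :: "nat \<Rightarrow> (nat \<Rightarrow> nat) \<Rightarrow> bool" where
  "is_fun_n n f \<longleftrightarrow> (\<forall>i\<in>{1..n}. f i \<in> {1..n})"

definition solves_eva :: "nat \<Rightarrow> (nat list \<Rightarrow> nat) \<Rightarrow> bool" where
  "solves_eva n nt \<longleftrightarrow> (\<forall>f. is_fun_n n f \<longrightarrow> (\<forall>x\<in>{1..n}. nt (eva_input n f x) = f x))"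

definition solves_eva_cot :: "nat \<Rightarrow> (nat list \<Rightarrow> nat) \<Rightarrow> nat \<Rightarrow> (nat list \<Rightarrow> nat) \<Rightarrow> bool" where
  "solves_eva_cot n nt T ans \<longleftrightarrow> (\<forall>f. is_fun_n n f \<longrightarrow>
     (\<forall>x\<in>{1..n}. ans (drop (Suc n) (cot_gen nt T (eva_input n f x))) = f x))"

end

theory Submission
  imports Defs "HOL-Library.FuncSet" "HOL-Library.Discrete_Functions"
begin


lemma lin_S_out: "\<not> (a < d \<and> b < d) \<Longrightarrow> lin_S rnd d fk vv k a b = 0"
  by (induction k) auto

lemma lin_z_out: "\<not> a < d \<Longrightarrow> lin_z rnd d fk k a = 0"
  by (induction k) (auto simp: rvec_def)

lemma lin_S_agree:
  assumes "\<And>j. n \<le> j \<Longrightarrow> j < m \<Longrightarrow> fk j = fk' j \<and> vv j = vv' j"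
    and "lin_S rnd d fk vv n = lin_S rnd d fk' vv' n"
    and "n \<le> k" "k \<le> m"
  shows "lin_S rnd d fk vv k = lin_S rnd d fk' vv' k"
  using assms(3,4)
proof (induction k)
  case 0 then show ?case using assms(2) by simp
next
  case (Suc k)
  show ?case
  proof (cases "n = Suc k")
    case True then show ?thesis using assms(2) by simp
  next
    case False
    then have "n \<le> k" "k < m" using Suc.prems by auto
    then have e3: "lin_S rnd d fk vv k = lin_S rnd d fk' vv' k" and e1: "fk k = fk' k"
      and e2: "vv k = vv' k" using Suc.IH assms(1)[of k] by auto
    show ?thesis unfolding lin_S.simps e1 e2 e3 ..
  qed
qed

lemma lin_z_agree:
  assumes "\<And>j. n \<le> j \<Longrightarrow> j < m \<Longrightarrow> fk j = fk' j"
    and "lin_z rnd d fk n = lin_z rnd d fk' n"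
    and "n \<le> k" "k \<le> m"
  shows "lin_z rnd d fk k = lin_z rnd d fk' k"
  using assms(3,4)
proof (induction k)
  case 0 then show ?case using assms(2) by simp
next
  case (Suc k)
  show ?case
  proof (cases "n = Suc k")
    case True then show ?thesis using assms(2) by simp
  next
    case False
    then have "n \<le> k" "k < m" using Suc.prems by auto
    then show ?thesis using Suc.IH assms(1)[of k] by simp
  qed
qed

lemma tlayer_agree:
  assumes "\<And>h. h < H \<Longrightarrow> hds h X i = hds h Y i"
  shows "tlayer rnd d H hds F X i = tlayer rnd d H hds F Y i"
proof -
  have "(\<lambda>k. if k < d * H then hds (k div d) X i (k mod d) else 0)
      = (\<lambda>k. if k < d * H then hds (k div d) Y i (k mod d) else 0)"
  proof
    fix k show "(if k < d * H then hds (k div d) X i (k mod d) else 0)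
      = (if k < d * H then hds (k div d) Y i (k mod d) else 0)"
    proof (cases "k < d * H")
      case True
      then have "k div d < H" by (simp add: less_mult_imp_div_less mult.commute)
      then show ?thesis using assms True by simp
    qed simp
  qed
  then show ?thesis unfolding tlayer_def by simp
qed

lemma lin_head_cong:
  assumes "lin_S rnd d (\<lambda>j. rvec rnd d (phi (mv rnd d K (X j)))) (\<lambda>j. mv rnd d V (X j)) (Suc i)
         = lin_S rnd d (\<lambda>j. rvec rnd d (phi (mv rnd d K (Y j)))) (\<lambda>j. mv rnd d V (Y j)) (Suc i)"
    and "lin_z rnd d (\<lambda>j. rvec rnd d (phi (mv rnd d K (X j)))) (Suc i)
         = lin_z rnd d (\<lambda>j. rvec rnd d (phi (mv rnd d K (Y j)))) (Suc i)"
    and "X i = Y i"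
  shows "lin_head rnd d Q K V phi X i = lin_head rnd d Q K V phi Y i"
  unfolding lin_head_def Let_def assms(1) assms(2) assms(3) ..

context
  fixes rnd :: "real \<Rightarrow> real" and d L H :: nat and emb :: "nat \<Rightarrow> nat \<Rightarrow> vec"
    and Q K V :: "nat \<Rightarrow> nat \<Rightarrow> mat" and phi :: "nat \<Rightarrow> nat \<Rightarrow> vec \<Rightarrow> vec"
    and mlp :: "nat \<Rightarrow> vec \<Rightarrow> vec" and dec :: "vec \<Rightarrow> nat"
begin

definition "HD = (\<lambda>l h. lin_head rnd d (Q l h) (K l h) (V l h) (phi l h))"
definition "RR X0 l = reps rnd d H HD mlp X0 l"
definition "FK l h X = (\<lambda>j. rvec rnd d (phi l h (mv rnd d (K l h) (X j))))"
definition "VV l h X = (\<lambda>j. mv rnd d (V l h) (X j))"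
definition "SS X0 l h k = lin_S rnd d (FK l h (RR X0 l)) (VV l h (RR X0 l)) k"
definition "ZZ X0 l h k = lin_z rnd d (FK l h (RR X0 l)) k"

lemma reps_agree:
  assumes "\<And>j. n \<le> j \<Longrightarrow> j < m \<Longrightarrow> X0 j = Y0 j"
    and "\<And>l h. l < L \<Longrightarrow> h < H \<Longrightarrow> SS X0 l h n = SS Y0 l h n \<and> ZZ X0 l h n = ZZ Y0 l h n"
  shows "l \<le> L \<Longrightarrow> n \<le> j \<Longrightarrow> j < m \<Longrightarrow> RR X0 l j = RR Y0 l j"
proof (induction l arbitrary: j)
  case 0 then show ?case using assms(1) by (simp add: RR_def)
next
  case (Suc l)
  have lL: "l < L" using Suc.prems by simp
  have IH: "\<And>j. n \<le> j \<Longrightarrow> j < m \<Longrightarrow> RR X0 l j = RR Y0 l j" using Suc.IH lL by simp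
  have HDeq: "HD l h (RR X0 l) j = HD l h (RR Y0 l) j" if hH: "h < H" for h
  proof -
    have S0: "SS X0 l h n = SS Y0 l h n" and Z0: "ZZ X0 l h n = ZZ Y0 l h n"
      using assms(2)[OF lL hH] by simp_all
    have S: "SS X0 l h (Suc j) = SS Y0 l h (Suc j)"
      unfolding SS_def
      by (rule lin_S_agree[where n=n and m=m, OF _ S0[unfolded SS_def]])
         (use Suc.prems in \<open>simp_all add: IH FK_def VV_def del: lin_S.simps\<close>)
    have Z: "ZZ X0 l h (Suc j) = ZZ Y0 l h (Suc j)"
      unfolding ZZ_def
      by (rule lin_z_agree[where n=n and m=m, OF _ Z0[unfolded ZZ_def]])
         (use Suc.prems in \<open>simp_all add: IH FK_def del: lin_z.simps\<close>)
    have Xj: "RR X0 l j = RR Y0 l j" using IH Suc.prems by simp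
    have "lin_head rnd d (Q l h) (K l h) (V l h) (phi l h) (RR X0 l) j
        = lin_head rnd d (Q l h) (K l h) (V l h) (phi l h) (RR Y0 l) j"
      by (rule lin_head_cong[where phi="phi l h" and K="K l h" and V="V l h" and X="RR X0 l"
            and Y="RR Y0 l" and i=j and Q="Q l h" and rnd=rnd and d=d, OF S[unfolded SS_def FK_def VV_def] Z[unfolded ZZ_def FK_def] Xj])
    then show ?thesis by (simp only: HD_def)
  qed
  have e1: "RR X0 (Suc l) j = tlayer rnd d H (HD l) (mlp l) (RR X0 l) j"
    and e2: "RR Y0 (Suc l) j = tlayer rnd d H (HD l) (mlp l) (RR Y0 l) j"
    by (simp_all only: RR_def reps.simps)
  have T: "tlayer rnd d H (HD l) (mlp l) (RR X0 l) j = tlayer rnd d H (HD l) (mlp l) (RR Y0 l) j"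
    by (rule tlayer_agree) (rule HDeq)
  show ?case using T by (simp only: e1 e2)
qed

lemma SS_agree:
  assumes "\<And>j. n \<le> j \<Longrightarrow> j < m \<Longrightarrow> X0 j = Y0 j"
    and "\<And>l h. l < L \<Longrightarrow> h < H \<Longrightarrow> SS X0 l h n = SS Y0 l h n \<and> ZZ X0 l h n = ZZ Y0 l h n"
    and "l < L" "h < H" "n \<le> k" "k \<le> m"
  shows "SS X0 l h k = SS Y0 l h k \<and> ZZ X0 l h k = ZZ Y0 l h k"
proof -
  have IH: "RR X0 l j = RR Y0 l j" if "n \<le> j" "j < m" for j
    using reps_agree[OF assms(1,2) less_imp_le[OF assms(3)] that] .
  have S0: "SS X0 l h n = SS Y0 l h n" and Z0: "ZZ X0 l h n = ZZ Y0 l h n"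
    using assms(2)[OF assms(3,4)] by simp_all
  have S: "SS X0 l h k = SS Y0 l h k"
    unfolding SS_def
    by (rule lin_S_agree[where n=n and m=m, OF _ S0[unfolded SS_def]])
       (use assms(5,6) in \<open>simp_all add: IH FK_def VV_def del: lin_S.simps\<close>)
  have Z: "ZZ X0 l h k = ZZ Y0 l h k"
    unfolding ZZ_def
    by (rule lin_z_agree[where n=n and m=m, OF _ Z0[unfolded ZZ_def]])
       (use assms(5,6) in \<open>simp_all add: IH FK_def del: lin_z.simps\<close>)
  show ?thesis using S Z by (rule conjI)
qed


definition "IDX = {..<L} \<times> {..<H} \<times> {..<d} \<times> {..<Suc d}"
definition "ST n xs = restrict (\<lambda>(l,h,a,b). if b < d then SS (embed rnd d emb xs) l h n a b
                                 else ZZ (embed rnd d emb xs) l h n a) IDX"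
definition "NT = lin_model rnd d L H emb Q K V phi mlp dec"

lemma NT_eq: "NT xs = dec (RR (embed rnd d emb xs) L (length xs - 1))"
  unfolding NT_def lin_model_def next_tok_def RR_def HD_def ..

lemma ST_prefix:
  assumes "take n ys = take n zs" "n \<le> length ys" "n \<le> length zs"
  shows "ST n ys = ST n zs"
proof -
  have nth: "ys ! j = zs ! j" if "j < n" for j
    by (metis assms nth_take that)
  have E: "embed rnd d emb ys j = embed rnd d emb zs j" if "0 \<le> j" "j < n" for j
    using nth[OF that(2)] by (simp add: embed_def)
  have b: "SS (embed rnd d emb ys) l h 0 = SS (embed rnd d emb zs) l h 0 \<and>
           ZZ (embed rnd d emb ys) l h 0 = ZZ (embed rnd d emb zs) l h 0" for l h
    by (simp add: SS_def ZZ_def)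
  have "SS (embed rnd d emb ys) l h n = SS (embed rnd d emb zs) l h n \<and>
        ZZ (embed rnd d emb ys) l h n = ZZ (embed rnd d emb zs) l h n" if "l < L" "h < H" for l h
    by (rule SS_agree[where m=n, OF E b that]) auto
  then show ?thesis unfolding ST_def IDX_def
    by (intro restrict_ext) auto
qed

lemma SS_out: "\<not> (a < d \<and> b < d) \<Longrightarrow> SS X l h k a b = 0"
  unfolding SS_def by (rule lin_S_out)

lemma ZZ_out: "\<not> a < d \<Longrightarrow> ZZ X l h k a = 0"
  unfolding ZZ_def by (rule lin_z_out)

lemma ST_det:
  assumes "ST n ys = ST n zs" "l < L" "h < H"
  shows "SS (embed rnd d emb ys) l h n = SS (embed rnd d emb zs) l h n \<and>
         ZZ (embed rnd d emb ys) l h n = ZZ (embed rnd d emb zs) l h n"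
proof (intro conjI ext)
  fix a b
  show "SS (embed rnd d emb ys) l h n a b = SS (embed rnd d emb zs) l h n a b"
  proof (cases "a < d \<and> b < d")
    case True
    then have "(l,h,a,b) \<in> IDX" using assms by (auto simp: IDX_def)
    then show ?thesis using fun_cong[OF assms(1), of "(l,h,a,b)"] True by (simp add: ST_def)
  qed (simp add: SS_out)
next
  fix a
  show "ZZ (embed rnd d emb ys) l h n a = ZZ (embed rnd d emb zs) l h n a"
  proof (cases "a < d")
    case True
    then have "(l,h,a,d) \<in> IDX" using assms by (auto simp: IDX_def)
    then show ?thesis using fun_cong[OF assms(1), of "(l,h,a,d)"] True by (simp add: ST_def)
  qed (simp add: ZZ_out)
qed

lemma NT_agree:
  assumes "length A0 = length B0" "n < length A0" "drop n A0 = drop n B0" "ST n A0 = ST n B0"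
  shows "NT (A0 @ ys) = NT (B0 @ ys)"
proof -
  define A where "A = A0 @ ys"
  define B where "B = B0 @ ys"
  have lAB: "length A = length B" using assms(1) by (simp add: A_def B_def)
  have dAB: "drop n A = drop n B" using assms by (simp add: A_def B_def)
  have "ST n A = ST n A0" by (rule ST_prefix) (use assms in \<open>auto simp: A_def\<close>)
  moreover have "ST n B = ST n B0" by (rule ST_prefix) (use assms in \<open>auto simp: B_def\<close>)
  ultimately have STAB: "ST n A = ST n B" using assms(4) by simp
  have E: "embed rnd d emb A j = embed rnd d emb B j" if "n \<le> j" "j < length A" for j
  proof -
    have "A ! j = drop n A ! (j - n)" using that by simp
    also have "\<dots> = drop n B ! (j - n)" by (simp only: dAB)
    also have "\<dots> = B ! j" using that lAB by simp
    finally show ?thesis by (simp add: embed_def)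
  qed
  have "RR (embed rnd d emb A) L (length A - 1) = RR (embed rnd d emb B) L (length A - 1)"
    by (rule reps_agree[where m="length A", OF E ST_det[OF STAB]]) (use assms in \<open>auto simp: A_def\<close>)
  then show ?thesis unfolding A_def[symmetric] B_def[symmetric] NT_eq using lAB by simp
qed

lemma cot_agree:
  assumes "length A0 = length B0" "n < length A0" "drop n A0 = drop n B0" "ST n A0 = ST n B0"
  shows "\<exists>ys. cot_gen NT t A0 = A0 @ ys \<and> cot_gen NT t B0 = B0 @ ys"
proof (induction t)
  case 0 then show ?case by simp
next
  case (Suc t)
  then obtain ys where "cot_gen NT t A0 = A0 @ ys" "cot_gen NT t B0 = B0 @ ys" by blast
  then show ?case using NT_agree[OF assms, of ys]
    by (intro exI[of _ "ys @ [NT (A0 @ ys)]"]) (simp add: Let_def)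
qed


lemma card_IDX: "card IDX = L * H * d * (d + 1)"
  by (simp add: IDX_def card_cartesian_product algebra_simps)

lemma finite_IDX: "finite IDX"
  by (simp add: IDX_def)

lemma lower_cot:
  assumes ps: "prec_scheme p P rnd"
    and lt: "real (L * H * d * (d + 1) * p) < real n * log 2 (real n)"
  shows "\<not> solves_eva_cot n NT T ans"
proof
  assume sol: "solves_eva_cot n NT T ans"
  have n2: "n \<ge> 2"
  proof (rule ccontr)
    assume "\<not> n \<ge> 2"
    then have "n = 0 \<or> n = 1" by auto
    then have "real n * log 2 (real n) = 0" by auto
    moreover have "0 \<le> real (L * H * d * (d + 1) * p)" by (rule of_nat_0_le_iff)
    ultimately show False using lt by linarith
  qed
  have fP: "finite P" and cP: "card P \<le> 2 ^ p" and rP: "\<And>x. rnd x \<in> P"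
    using ps by (auto simp: prec_scheme_def)
  define F where "F = PiE {1..n} (\<lambda>_. {1..n::nat})"
  define sv where "sv f = ST n (eva_input n f 1)" for f
  have len: "length (eva_input n f x) = Suc n" for f x by (simp add: eva_input_def)
  have tk: "take n (eva_input n f x) = map f [1..<Suc n]" for f x by (simp add: eva_input_def)
  have dr: "drop n (eva_input n f x) = [x]" for f x by (simp add: eva_input_def)
  have inj: "inj_on sv F"
  proof (rule inj_onI)
    fix f g assume fF: "f \<in> F" and gF: "g \<in> F" and eq: "sv f = sv g"
    show "f = g"
    proof (rule PiE_ext[OF fF[unfolded F_def] gF[unfolded F_def]])
      fix x :: nat assume x: "x \<in> {1..n}"
      have STf: "ST n (eva_input n f x) = sv f" unfolding sv_def
        by (rule ST_prefix) (simp_all add: tk len)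
      have STg: "ST n (eva_input n g x) = sv g" unfolding sv_def
        by (rule ST_prefix) (simp_all add: tk len)
      obtain ys where ys: "cot_gen NT T (eva_input n f x) = eva_input n f x @ ys"
          "cot_gen NT T (eva_input n g x) = eva_input n g x @ ys"
        using cot_agree[of "eva_input n f x" "eva_input n g x" n T] len dr STf STg eq by auto
      have ff: "is_fun_n n f" "is_fun_n n g" using fF gF by (auto simp: F_def is_fun_n_def)
      have "ans (drop (Suc n) (cot_gen NT T (eva_input n f x))) = f x"
        using sol ff(1) x unfolding solves_eva_cot_def by blast
      then have "f x = ans ys" using ys(1) len[of f x] by simp
      moreover have "ans (drop (Suc n) (cot_gen NT T (eva_input n g x))) = g x"
        using sol ff(2) x unfolding solves_eva_cot_def by blast
      then have "g x = ans ys" using ys(2) len[of g x] by simp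
      ultimately show "f x = g x" by simp
    qed
  qed
  obtain n' where n': "n = Suc n'" using n2 by (cases n) auto
  have img: "sv ` F \<subseteq> PiE IDX (\<lambda>_. P)"
  proof
    fix s assume "s \<in> sv ` F"
    then obtain f where s: "s = sv f" by auto
    show "s \<in> PiE IDX (\<lambda>_. P)"
      unfolding s sv_def ST_def restrict_PiE_iff
    proof
      fix i assume "i \<in> IDX"
      then obtain l h a b where i: "i = (l,h,a,b)" "a < d" "b < Suc d" by (auto simp: IDX_def)
      show "(case i of (l, h, a, b) \<Rightarrow> if b < d then SS (embed rnd d emb (eva_input n f 1)) l h n a b
           else ZZ (embed rnd d emb (eva_input n f 1)) l h n a) \<in> P"
        using i rP by (auto simp: SS_def ZZ_def n' rvec_def)
    qed
  qed
  have cF: "card F = n ^ n" by (simp add: F_def card_PiE)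
  have "card F \<le> card (PiE IDX (\<lambda>_. P))"
    using card_inj_on_le[OF inj img] finite_PiE[OF finite_IDX, of "\<lambda>_. P"] fP
    by simp
  also have "\<dots> = card P ^ card IDX" by (simp add: card_PiE finite_IDX)
  also have "\<dots> \<le> (2 ^ p) ^ card IDX" by (rule power_mono[OF cP]) simp
  also have "\<dots> = 2 ^ (L * H * d * (d + 1) * p)" by (simp add: card_IDX power_mult[symmetric] mult.commute)
  finally have le: "n ^ n \<le> (2::nat) ^ (L * H * d * (d + 1) * p)" unfolding cF .
  have "real n * log 2 (real n) = log 2 (real (n ^ n))"
    by (simp add: log_nat_power)
  also have "\<dots> \<le> log 2 (real ((2::nat) ^ (L * H * d * (d + 1) * p)))"
    using le n2 by (subst log_le_cancel_iff) (auto simp del: of_nat_power)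
  also have "\<dots> = real (L * H * d * (d + 1) * p)"
    by (simp add: log_nat_power)
  finally show False using lt by simp
qed

end


lemma fx_near:
  assumes r: "2 \<le> r" and v: "\<bar>v\<bar> \<le> 2 ^ (r - 1) - 1"
    and y: "\<bar>y - of_int v\<bar> < 1 / 2 ^ (r + 1)"
  shows "fx_rnd (2 * r) y = of_int v"
proof -
  have pd: "2 * r div 2 = r" by simp
  have pos: "(0::real) < 2 ^ r" by simp
  have e: "y * 2 ^ r - of_int (v * 2 ^ r) = (y - of_int v) * 2 ^ r" by (simp add: left_diff_distrib)
  have "\<bar>y * 2 ^ r - of_int (v * 2 ^ r)\<bar> = \<bar>y - of_int v\<bar> * 2 ^ r"
    unfolding e abs_mult using pos by simp
  also have "\<dots> < 1 / 2 ^ (r + 1) * 2 ^ r"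
    using y pos by (intro mult_strict_right_mono) auto
  also have "\<dots> = 1 / 2" by (simp add: field_simps)
  finally have rd: "round (y * 2 ^ r) = v * 2 ^ r" by (intro round_unique') simp
  have "\<bar>v * 2 ^ r\<bar> \<le> (2 ^ (r - 1) - 1) * 2 ^ r"
    using v by (simp add: abs_mult mult_right_mono)
  also have "\<dots> = 2 ^ (2 * r - 1) - 2 ^ r"
  proof -
    obtain r' where r': "r = Suc r'" using r by (cases r) auto
    have "(2::int) ^ (r - 1) * 2 ^ r = 2 ^ (r' + Suc r')" by (simp add: r' power_add)
    also have "r' + Suc r' = 2 * r - 1" using r' by simp
    finally have "(2::int) ^ (r - 1) * 2 ^ r = 2 ^ (2 * r - 1)" .
    then show ?thesis by (simp add: algebra_simps)
  qed
  also have "\<dots> \<le> 2 ^ (2 * r - 1) - 1" by simp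
  finally have bd: "\<bar>v * 2 ^ r\<bar> \<le> 2 ^ (2 * r - 1) - 1" .
  have "max (- (2 ^ (2 * r - 1) - 1)) (min (2 ^ (2 * r - 1) - 1) (v * 2 ^ r)) = v * 2 ^ r"
  proof -
    have "v * 2 ^ r \<le> 2 ^ (2 * r - 1) - 1" "- (2 ^ (2 * r - 1) - 1) \<le> v * 2 ^ r"
      using bd unfolding abs_le_iff by linarith+
    then show ?thesis by (simp only: max_def min_def) simp
  qed
  then show ?thesis unfolding fx_rnd_def Let_def pd rd by simp
qed

lemma fx_int:
  assumes "2 \<le> r" "\<bar>v\<bar> \<le> 2 ^ (r - 1) - 1"
  shows "fx_rnd (2 * r) (of_int v) = of_int v"
  by (rule fx_near[OF assms]) simp

lemma fx_nat:
  assumes "2 \<le> r" "v \<le> 2 ^ (r - 1) - 1"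
  shows "fx_rnd (2 * r) (real v) = real v" "fx_rnd (2 * r) (- real v) = - real v"
proof -
  have i1: "int v \<le> int (2 ^ (r - 1) - 1)" using assms(2) by (simp only: of_nat_le_iff)
  have i2: "int (2 ^ (r - 1) - 1) = 2 ^ (r - 1) - 1" by (simp add: of_nat_diff)
  have a: "\<bar>int v\<bar> \<le> 2 ^ (r - 1) - 1" using i1 i2 by simp
  have b: "\<bar>- int v\<bar> \<le> 2 ^ (r - 1) - 1" using a by simp
  show "fx_rnd (2 * r) (real v) = real v" using fx_int[OF assms(1) a] by simp
  show "fx_rnd (2 * r) (- real v) = - real v" using fx_int[OF assms(1) b] by simp
qed


lemma sum7: "(\<Sum>a<(7::nat). g a) = g 0 + g 1 + g 2 + g 3 + g 4 + g 5 + (g 6 :: real)"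
  by (simp add: eval_nat_numeral lessThan_Suc add.commute add.left_commute)

lemma aux_exp: "8 * s + 18 < 32 * (2::nat) ^ s"
  by (induction s) auto

context
  fixes n s :: nat
  assumes ns: "n + 1 \<le> 2 ^ s"
begin

definition "rr = 4 * s + 8"
definition "bt = 2 * rr + 2"
definition "Bd = (2::nat) ^ (rr - 1) - 1"
definition "rnd = fx_rnd (2 * rr)"

lemma rr2: "2 \<le> rr" by (simp add: rr_def)

lemma big: "bt * (n + 1) ^ 2 \<le> Bd"
proof -
  have "bt * (n + 1) ^ 2 \<le> (8 * s + 18) * (2 ^ s) ^ 2"
  proof -
    have "bt = 8 * s + 18" unfolding bt_def rr_def by simp
    moreover have "(n + 1) ^ 2 \<le> (2 ^ s) ^ 2" by (intro power_mono ns) simp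
    ultimately show ?thesis by simp
  qed
  also have "\<dots> < 32 * 2 ^ s * (2 ^ s) ^ 2"
    using aux_exp[of s] by (intro mult_strict_right_mono) auto
  also have "\<dots> = 2 ^ 5 * 2 ^ s * 2 ^ (s * 2)" by (simp add: power_mult)
  also have "\<dots> = 2 ^ (5 + s + s * 2)" by (simp only: power_add)
  also have "5 + s + s * 2 = 3 * s + 5" by simp
  also have "(2::nat) ^ (3 * s + 5) \<le> 2 ^ (rr - 1)" unfolding rr_def by (intro power_increasing) auto
  finally show ?thesis unfolding Bd_def by simp
qed

lemma n_lt: "n < 2 ^ rr"
proof -
  have "n < 2 ^ s" using ns by simp
  also have "(2::nat) ^ s \<le> 2 ^ rr" unfolding rr_def by (intro power_increasing) auto
  finally show ?thesis .
qed

lemma rnd_nat: "v \<le> Bd \<Longrightarrow> rnd (real v) = real v"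
  "v \<le> Bd \<Longrightarrow> rnd (- real v) = - real v"
  unfolding rnd_def Bd_def using fx_nat[OF rr2] by auto

lemma n_le_big: "n \<le> bt * (n + 1) ^ 2"
proof -
  have bt1: "1 \<le> bt" by (simp add: bt_def)
  have sq: "(n + 1) ^ 2 = n * n + 2 * n + 1" by (simp add: power2_eq_square algebra_simps)
  have h0: "(n + 1) ^ 2 \<le> bt * (n + 1) ^ 2" using bt1 by simp
  show ?thesis using h0 sq by linarith
qed

lemma Bd1: "1 \<le> Bd"
proof -
  have "0 < bt * (n + 1) ^ 2" by (simp add: bt_def)
  then show ?thesis using big by linarith
qed

lemma rnd0: "rnd 0 = 0" using rnd_nat(1)[of 0] by simp
lemma rnd1: "rnd 1 = 1"
proof -
  have "0 < bt * (n + 1) ^ 2" by (simp add: bt_def)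
  then have "1 \<le> Bd" using big by linarith
  then show ?thesis using rnd_nat(1)[of 1] by simp
qed


definition "emb7 i t = (\<lambda>k::nat. if k = 0 then real (2 * bt * t) else if k = 1 then - real bt
   else if k = 2 then - real (bt * t ^ 2) else if k = 3 then real (i + 1) else if k = 4 then real ((i + 1) ^ 2)
   else if k = 5 then 1 else if k = 6 then real t else 0)"

lemma le_Bd: "m \<le> bt * (n + 1) ^ 2 \<Longrightarrow> m \<le> Bd" using big by linarith

lemma emb_exact:
  assumes "i \<le> n" "t \<le> n"
  shows "rvec rnd 7 (emb7 i t) = emb7 i t"
proof
  fix k
  have bt1: "1 \<le> bt" by (simp add: bt_def)
  have sq: "(n + 1) ^ 2 = n * n + 2 * n + 1" by (simp add: power2_eq_square algebra_simps)
  have b1: "2 * bt * t \<le> Bd"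
  proof (rule le_Bd)
    have "2 * t \<le> (n + 1) ^ 2" using assms(2) sq by linarith
    then show "2 * bt * t \<le> bt * (n + 1) ^ 2" by (metis mult.assoc mult.commute mult_le_mono2)
  qed
  have b2: "bt \<le> Bd" by (rule le_Bd) (simp add: sq)
  have b3: "bt * t ^ 2 \<le> Bd" by (rule le_Bd) (intro mult_le_mono2 power_mono, use assms in auto)
  have h0: "(n + 1) ^ 2 \<le> bt * (n + 1) ^ 2" using bt1 by simp
  have h00: "n + 1 \<le> (n + 1) ^ 2" using sq by linarith
  have b4: "i + 1 \<le> Bd" by (rule le_Bd) (use assms h0 h00 in linarith)
  have "(i + 1) ^ 2 \<le> (n + 1) ^ 2" using assms by (intro power_mono) auto
  then have b5: "(i + 1) ^ 2 \<le> Bd" by (intro le_Bd) (use h0 in linarith)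
  have b6: "t \<le> Bd" by (rule le_Bd) (use assms h0 h00 in linarith)
  show "rvec rnd 7 (emb7 i t) k = emb7 i t k"
    using rnd_nat(1)[OF b1, simplified] rnd_nat(2)[OF b2, simplified] rnd_nat(2)[OF b3, simplified]
      rnd_nat(1)[OF b4, simplified] rnd_nat(1)[OF b5, simplified] rnd_nat(1)[OF b6, simplified]
    by (auto simp: rvec_def emb7_def rnd1)
qed

lemma mvQ: "mv rnd 7 (\<lambda>a b. if a < 3 \<and> b = a then 1 else 0) Y = (\<lambda>a. if a < 3 then rnd (Y a) else 0)"
proof
  fix a
  show "mv rnd 7 (\<lambda>a b. if a < 3 \<and> b = a then 1 else 0) Y a = (if a < 3 then rnd (Y a) else 0)"
  proof (cases "a < 3")
    case True
    have "(\<Sum>b<7. (if a < 3 \<and> b = a then 1 else 0) * Y b) = (\<Sum>b<7. if b = a then Y b else 0)"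
      using True by (intro sum.cong) auto
    also have "\<dots> = Y a" using True by (simp add: sum.delta)
    finally show ?thesis using True by (simp add: mv_def rvec_def)
  next
    case False
    have "(\<Sum>b<7. (if a < 3 \<and> b = a then 1 else 0) * Y b) = 0" using False by simp
    then show ?thesis using False by (simp add: mv_def rvec_def rnd0)
  qed
qed

lemma mvK: "mv rnd 7 (\<lambda>a b. if a < 3 \<and> b = a + 3 then 1 else 0) Y = (\<lambda>a. if a < 3 then rnd (Y (a + 3)) else 0)"
proof
  fix a
  show "mv rnd 7 (\<lambda>a b. if a < 3 \<and> b = a + 3 then 1 else 0) Y a = (if a < 3 then rnd (Y (a + 3)) else 0)"
  proof (cases "a < 3")
    case True
    have "(\<Sum>b<7. (if a < 3 \<and> b = a + 3 then 1 else 0) * Y b) = (\<Sum>b<7. if b = a + 3 then Y b else 0)"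
      using True by (intro sum.cong) auto
    also have "\<dots> = Y (a + 3)" using True by (simp add: sum.delta)
    finally show ?thesis using True by (simp add: mv_def rvec_def)
  next
    case False
    have "(\<Sum>b<7. (if a < 3 \<and> b = a + 3 then 1 else 0) * Y b) = 0" using False by simp
    then show ?thesis using False by (simp add: mv_def rvec_def rnd0)
  qed
qed

lemma mvV: "mv rnd 7 (\<lambda>a b. if a = 0 \<and> b = 6 then 1 else 0) Y 0 = rnd (Y 6)"
proof -
  have "(\<Sum>b<7. (if (0::nat) = 0 \<and> b = 6 then 1 else 0) * Y b) = (\<Sum>b<7. if b = 6 then Y b else 0)"
    by (intro sum.cong) auto
  also have "\<dots> = Y 6" by (simp add: sum.delta)
  finally show ?thesis by (simp add: mv_def rvec_def)
qed


definition "Q0 = (\<lambda>a b. if a < 3 \<and> b = a then 1 else (0::real))"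
definition "K0 = (\<lambda>a b. if a < 3 \<and> b = a + 3 then 1 else (0::real))"
definition "V0 = (\<lambda>a b. if a = 0 \<and> b = 6 then 1 else (0::real))"

lemma mvQ0: "mv rnd 7 Q0 Y = (\<lambda>a. if a < 3 then rnd (Y a) else 0)"
  unfolding Q0_def by (rule mvQ)
lemma mvK0: "mv rnd 7 K0 Y = (\<lambda>a. if a < 3 then rnd (Y (a + 3)) else 0)"
  unfolding K0_def by (rule mvK)
lemma mvV0: "mv rnd 7 V0 Y 0 = rnd (Y 6)"
  unfolding V0_def by (rule mvV)

lemma emb_rnd: "i \<le> n \<Longrightarrow> t \<le> n \<Longrightarrow> k < 7 \<Longrightarrow> rnd (emb7 i t k) = emb7 i t k"
  using fun_cong[OF emb_exact, of i t k] by (simp add: rvec_def)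

lemma Bd_int: "int Bd = 2 ^ (rr - 1) - 1"
  unfolding Bd_def by (simp add: of_nat_diff)

lemma rnd_near: "\<bar>v\<bar> \<le> int Bd \<Longrightarrow> \<bar>y - of_int v\<bar> < 1 / 2 ^ (rr + 1) \<Longrightarrow> rnd y = of_int v"
  unfolding rnd_def Bd_int by (rule fx_near[OF rr2])

lemma exp_bt: "real n * exp (- real bt) < 1 / 2 ^ (rr + 1)"
proof -
  have e2: "(2::real) ^ bt \<le> exp (real bt)"
  proof -
    have "(2::real) \<le> exp 1" using exp_ge_add_one_self[of 1] by simp
    then have "(2::real) ^ bt \<le> exp 1 ^ bt" by (rule power_mono) simp
    also have "\<dots> = exp (real bt)" using exp_of_nat_mult[of bt "1::real"] by simp
    finally show ?thesis .
  qed
  have "real n < real (2 ^ rr)" using n_lt by (simp only: of_nat_less_iff)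
  then have "real n < 2 ^ rr" by simp
  then have "real n * 2 ^ (rr + 1) < 2 ^ rr * 2 ^ (rr + 1)"
    by (intro mult_strict_right_mono) simp_all
  also have "\<dots> = 2 ^ (rr + (rr + 1))" by (simp only: power_add)
  also have "\<dots> \<le> 2 ^ bt" unfolding bt_def by (intro power_increasing) simp_all
  also have "\<dots> \<le> exp (real bt)" by (rule e2)
  finally have "real n * 2 ^ (rr + 1) < exp (real bt)" .
  then show ?thesis by (simp add: exp_minus field_simps)
qed


lemma head_val:
  assumes f: "is_fun_n n f" and x: "x \<in> {1..n}"
  shows "sm_head rnd 7 Q0 K0 V0 (embed rnd 7 emb7 (eva_input n f x)) n 0 = real (f x)"
proof -
  define xs where "xs = eva_input n f x"
  define X where "X = embed rnd 7 emb7 xs"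
  have x1: "1 \<le> x" "x \<le> n" using x by auto
  have tok: "xs ! j = (if j < n then f (j + 1) else x)" if "j \<le> n" for j
    using that unfolding xs_def eva_input_def
    by (auto simp: nth_append intro!: arg_cong[where f=f])
  have tokn: "xs ! j \<le> n" if "j \<le> n" for j
  proof (cases "j < n")
    case True
    then have "j + 1 \<in> {1..n}" by auto
    then show ?thesis using f tok[OF that] True by (auto simp: is_fun_n_def)
  qed (use tok[OF that] x1 in auto)
  have Xj: "X j = emb7 j (xs ! j)" if "j \<le> n" for j
    using emb_exact[OF that tokn[OF that]] by (simp add: X_def embed_def)
  have q: "mv rnd 7 Q0 (X n) = (\<lambda>a. if a < 3 then emb7 n x a else 0)"
    unfolding mvQ0 Xj[OF order_refl] tok[OF order_refl]
    using emb_rnd[of n x] x1 by (auto intro!: ext)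
  have kj: "mv rnd 7 K0 (X j) = (\<lambda>a. if a < 3 then emb7 j (xs ! j) (a + 3) else 0)" if "j \<le> n" for j
    unfolding mvK0 Xj[OF that]
    using emb_rnd[OF that tokn[OF that]] by (auto intro!: ext)
  define sc where "sc j = - (real bt * (real x - real j - 1) ^ 2)" for j
  have sum_sc: "(\<Sum>a<7. mv rnd 7 Q0 (X n) a * mv rnd 7 K0 (X j) a) = sc j" if "j \<le> n" for j
    unfolding q kj[OF that] sum7 sc_def
    by (simp add: emb7_def power2_eq_square algebra_simps)
  have S: "rnd (\<Sum>a<7. mv rnd 7 Q0 (X n) a * mv rnd 7 K0 (X j) a) = sc j" if "j \<le> n" for j
  proof -
    define z where "z = int x - int j - 1"
    have zb: "\<bar>z\<bar> \<le> int n + 1" using that x1 by (auto simp: z_def)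
    have "z ^ 2 = \<bar>z\<bar> ^ 2" by simp
    also have "\<bar>z\<bar> ^ 2 \<le> (int n + 1) ^ 2" by (rule power_mono[OF zb]) simp
    finally have "z ^ 2 \<le> (int n + 1) ^ 2" .
    then have "int bt * z ^ 2 \<le> int bt * (int n + 1) ^ 2" by (intro mult_left_mono) auto
    also have "\<dots> = int (bt * (n + 1) ^ 2)" by simp
    also have "\<dots> \<le> int Bd" using big by (simp only: of_nat_le_iff)
    finally have vb: "\<bar>- (int bt * z ^ 2)\<bar> \<le> int Bd" by simp
    have scz: "sc j = of_int (- (int bt * z ^ 2))" by (simp add: sc_def z_def)
    show ?thesis unfolding sum_sc[OF that] scz by (rule rnd_near[OF vb]) simp
  qed
  define t where "t = x - 1"
  have tn: "t \<le> n" "t < n" using x1 by (auto simp: t_def)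
  have sct: "sc t = 0" using x1 by (simp add: sc_def t_def of_nat_diff)
  have scj: "sc j \<le> - real bt" if "j \<noteq> t" for j
  proof -
    define z where "z = int x - int j - 1"
    have "z \<noteq> 0" using that x1 by (auto simp: z_def t_def)
    then have "1 \<le> \<bar>z\<bar>" by linarith
    then have "1 \<le> \<bar>z\<bar> ^ 2" by (rule one_le_power)
    then have z1: "1 \<le> z ^ 2" by simp
    have "real x - real j - 1 = of_int z" by (simp add: z_def)
    then have "(real x - real j - 1) ^ 2 = of_int (z ^ 2)" by simp
    then have w1: "1 \<le> (real x - real j - 1) ^ 2" using z1 by (simp only: of_int_le_iff[symmetric])
    have "real bt * 1 \<le> real bt * (real x - real j - 1) ^ 2"
      by (rule mult_left_mono[OF w1]) simp
    then show ?thesis unfolding sc_def by simp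
  qed
  define Z where "Z = (\<Sum>j\<le>n. exp (sc j))"
  have Zsplit: "Z = 1 + (\<Sum>j\<in>{..n} - {t}. exp (sc j))"
  proof -
    have "Z = exp (sc t) + (\<Sum>j\<in>{..n} - {t}. exp (sc j))"
      unfolding Z_def by (rule sum.remove) (use tn in auto)
    then show ?thesis using sct by simp
  qed
  have R0: "0 \<le> (\<Sum>j\<in>{..n} - {t}. exp (sc j))" by (intro sum_nonneg) simp
  have R1: "(\<Sum>j\<in>{..n} - {t}. exp (sc j)) \<le> real n * exp (- real bt)"
  proof -
    have "(\<Sum>j\<in>{..n} - {t}. exp (sc j)) \<le> of_nat (card ({..n} - {t})) * exp (- real bt)"
      by (rule sum_bounded_above) (use scj in auto)
    also have "card ({..n} - {t}) = n" using tn by simp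
    finally show ?thesis by simp
  qed
  have Z1: "1 \<le> Z" using Zsplit R0 by simp
  have eps: "Z - 1 < 1 / 2 ^ (rr + 1)" using Zsplit R1 exp_bt by simp
  have wt: "rnd (exp (sc t) / Z) = 1"
  proof -
    have "1 / Z \<le> 1" using Z1 by simp
    then have "\<bar>1 / Z - 1\<bar> = 1 - 1 / Z" by simp
    also have "1 - 1 / Z = (Z - 1) / Z" using Z1 by (simp add: field_simps)
    also have "\<dots> \<le> (Z - 1) / 1" by (rule divide_left_mono) (use Z1 in auto)
    finally have "\<bar>1 / Z - of_int 1\<bar> < 1 / 2 ^ (rr + 1)" using eps by simp
    moreover have "\<bar>1::int\<bar> \<le> int Bd" using Bd1 by simp
    ultimately show ?thesis using rnd_near[of 1 "1 / Z"] sct by simp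
  qed
  have wj: "rnd (exp (sc j) / Z) = 0" if "j \<noteq> t" for j
  proof -
    have "exp (sc j) / Z \<le> exp (sc j) / 1" by (rule divide_left_mono) (use Z1 in auto)
    also have "\<dots> \<le> exp (- real bt)" using scj[OF that] by simp
    also have "\<dots> \<le> real n * exp (- real bt)" using x1 by simp
    finally have "\<bar>exp (sc j) / Z - of_int 0\<bar> < 1 / 2 ^ (rr + 1)" using exp_bt Z1 by simp
    then show ?thesis using rnd_near[of 0 "exp (sc j) / Z"] by simp
  qed
  have Zeq: "(\<Sum>j\<le>n. exp (rnd (\<Sum>a<7. mv rnd 7 Q0 (X n) a * mv rnd 7 K0 (X j) a))) = Z"
    unfolding Z_def by (intro sum.cong) (simp_all add: S)
  have "(\<Sum>j\<le>n. rnd (exp (rnd (\<Sum>a<7. mv rnd 7 Q0 (X n) a * mv rnd 7 K0 (X j) a)) / Z) * mv rnd 7 V0 (X j) 0)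
      = (\<Sum>j\<le>n. if j = t then real (xs ! j) else 0)"
  proof (intro sum.cong refl)
    fix j assume jn: "j \<in> {..n}"
    then have jn': "j \<le> n" by simp
    have V: "mv rnd 7 V0 (X j) 0 = real (xs ! j)"
      unfolding mvV0 Xj[OF jn'] using emb_rnd[OF jn' tokn[OF jn'], of 6] by (simp add: emb7_def)
    show "rnd (exp (rnd (\<Sum>a<7. mv rnd 7 Q0 (X n) a * mv rnd 7 K0 (X j) a)) / Z) * mv rnd 7 V0 (X j) 0
        = (if j = t then real (xs ! j) else 0)"
      unfolding S[OF jn'] V using wt wj by auto
  qed
  also have "\<dots> = real (xs ! t)" using tn by (simp add: sum.delta)
  also have "\<dots> = real (f x)" using tok[of t] tn x1 by (simp add: t_def)
  finally have main: "(\<Sum>j\<le>n. rnd (exp (rnd (\<Sum>a<7. mv rnd 7 Q0 (X n) a * mv rnd 7 K0 (X j) a)) / Z)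
      * mv rnd 7 V0 (X j) 0) = real (f x)" .
  have fxb: "f x \<le> Bd"
  proof -
    have "f x \<le> n" using f x by (auto simp: is_fun_n_def)
    also have "n \<le> bt * (n + 1) ^ 2" by (rule n_le_big)
    finally show ?thesis by (rule le_Bd)
  qed
  show ?thesis
    unfolding xs_def[symmetric] X_def[symmetric] sm_head_def Let_def Zeq
    using main rnd_nat(1)[OF fxb] by (simp add: rvec_def)
qed


lemma model_solves:
  "solves_eva n (sm_model (fx_rnd (2 * rr)) 7 1 1 emb7 (\<lambda>l h. Q0) (\<lambda>l h. K0) (\<lambda>l h. V0)
      (\<lambda>l v. v) (\<lambda>v. nat \<lfloor>v 0\<rfloor>))"
  unfolding solves_eva_def
proof (intro allI impI ballI)
  fix f x assume f: "is_fun_n n f" and x: "x \<in> {1..n}"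
  have len: "length (eva_input n f x) - 1 = n" by (simp add: eva_input_def)
  have fxb: "f x \<le> Bd" using f x n_le_big le_Bd by (force simp: is_fun_n_def)
  have "sm_model (fx_rnd (2 * rr)) 7 1 1 emb7 (\<lambda>l h. Q0) (\<lambda>l h. K0) (\<lambda>l h. V0) (\<lambda>l v. v)
          (\<lambda>v. nat \<lfloor>v 0\<rfloor>) (eva_input n f x)
      = nat \<lfloor>rnd (sm_head rnd 7 Q0 K0 V0 (embed rnd 7 emb7 (eva_input n f x)) n 0)\<rfloor>"
    unfolding sm_model_def next_tok_def len rnd_def[symmetric]
    by (simp add: tlayer_def rvec_def)
  also have "\<dots> = f x" unfolding head_val[OF f x] rnd_nat(1)[OF fxb] by simp
  finally show "sm_model (fx_rnd (2 * rr)) 7 1 1 emb7 (\<lambda>l h. Q0) (\<lambda>l h. K0) (\<lambda>l h. V0) (\<lambda>l v. v)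
          (\<lambda>v. nat \<lfloor>v 0\<rfloor>) (eva_input n f x) = f x" .
qed

lemma weights_ok:
  "weights_in (fx_set (2 * rr)) 1 1 7 (\<lambda>l h. Q0)"
  "weights_in (fx_set (2 * rr)) 1 1 7 (\<lambda>l h. K0)"
  "weights_in (fx_set (2 * rr)) 1 1 7 (\<lambda>l h. V0)"
proof -
  have "(0::real) \<in> fx_set (2 * rr)" "(1::real) \<in> fx_set (2 * rr)"
    unfolding fx_set_def using rnd0 rnd1 unfolding rnd_def by (metis rangeI)+
  then show "weights_in (fx_set (2 * rr)) 1 1 7 (\<lambda>l h. Q0)"
    "weights_in (fx_set (2 * rr)) 1 1 7 (\<lambda>l h. K0)"
    "weights_in (fx_set (2 * rr)) 1 1 7 (\<lambda>l h. V0)"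
    by (auto simp: weights_in_def Q0_def K0_def V0_def)
qed

end

lemma upper:
  "\<exists>(c::real) (k::nat). \<forall>(n::nat)\<ge>2. \<exists>(H::nat) (d::nat) (p::nat) emb Q K V mlp dec.
            weights_in (fx_set p) 1 H d Q \<and> weights_in (fx_set p) 1 H d K \<and> weights_in (fx_set p) 1 H d V \<and>
            real (H * d * p) \<le> c * (log 2 (real n)) ^ k \<and>
            solves_eva n (sm_model (fx_rnd p) d 1 H emb Q K V mlp dec)"
proof (rule exI[of _ 224], rule exI[of _ 1], intro allI impI)
  fix n :: nat assume n2: "2 \<le> n"
  define s where "s = floor_log n + 1"
  have ns: "n + 1 \<le> 2 ^ s" using floor_log_exp2_gt[of n] by (simp add: s_def)
  have lg1: "1 \<le> log 2 (real n)" using n2 by simp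
  have fl: "real (floor_log n) \<le> log 2 (real n)"
  proof -
    have "floor_log n = nat \<lfloor>log 2 (real n)\<rfloor>" using n2 by (simp add: floor_log_altdef)
    moreover have "real (nat \<lfloor>log 2 (real n)\<rfloor>) \<le> log 2 (real n)" using lg1 by linarith
    ultimately show ?thesis by simp
  qed
  have "rr s = 4 * s + 8" by (rule rr_def[OF ns])
  then have "real (1 * 7 * (2 * rr s)) = 56 * real (floor_log n) + 168" by (simp add: s_def)
  also have "\<dots> \<le> 224 * log 2 (real n) ^ 1" using fl lg1 by simp
  finally have bd: "real (1 * 7 * (2 * rr s)) \<le> 224 * log 2 (real n) ^ 1" .
  show "\<exists>(H::nat) (d::nat) (p::nat) emb Q K V mlp dec.
            weights_in (fx_set p) 1 H d Q \<and> weights_in (fx_set p) 1 H d K \<and> weights_in (fx_set p) 1 H d V \<and>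
            real (H * d * p) \<le> 224 * (log 2 (real n)) ^ 1 \<and>
            solves_eva n (sm_model (fx_rnd p) d 1 H emb Q K V mlp dec)"
    using weights_ok[OF ns] model_solves[OF ns] bd by blast
qed


lemma eva_to_cot:
  assumes "solves_eva n nt"
  shows "solves_eva_cot n nt 1 hd"
  unfolding solves_eva_cot_def
proof (intro allI impI ballI)
  fix f x assume f: "is_fun_n n f" and x: "x \<in> {1..n}"
  have len: "length (eva_input n f x) = Suc n" by (simp add: eva_input_def)
  have "drop (Suc n) (cot_gen nt 1 (eva_input n f x)) = [nt (eva_input n f x)]"
    using len by (simp add: Let_def)
  then show "hd (drop (Suc n) (cot_gen nt 1 (eva_input n f x))) = f x"
    using assms f x unfolding solves_eva_def by simp
qed

theorem theoremA3:
  shows "(\<forall>(n::nat) (L::nat) (H::nat) (d::nat) (p::nat) P rnd emb Q K V phi mlp dec.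
            prec_scheme p P rnd \<and> weights_in P L H d Q \<and> weights_in P L H d K \<and> weights_in P L H d V \<and>
            real (L * H * d * (d + 1) * p) < real n * log 2 (real n)
            \<longrightarrow> \<not> solves_eva n (lin_model rnd d L H emb Q K V phi mlp dec))
       \<and> (\<exists>(c::real) (k::nat). \<forall>(n::nat)\<ge>2. \<exists>(H::nat) (d::nat) (p::nat) emb Q K V mlp dec.
            weights_in (fx_set p) 1 H d Q \<and> weights_in (fx_set p) 1 H d K \<and> weights_in (fx_set p) 1 H d V \<and>
            real (H * d * p) \<le> c * (log 2 (real n)) ^ k \<and>
            solves_eva n (sm_model (fx_rnd p) d 1 H emb Q K V mlp dec))
       \<and> (\<forall>(n::nat) (L::nat) (H::nat) (d::nat) (p::nat) P rnd emb Q K V phi mlp dec (T::nat) ans.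
            prec_scheme p P rnd \<and> weights_in P L H d Q \<and> weights_in P L H d K \<and> weights_in P L H d V \<and>
            real (L * H * d * (d + 1) * p) < real n * log 2 (real n)
            \<longrightarrow> \<not> solves_eva_cot n (lin_model rnd d L H emb Q K V phi mlp dec) T ans)"
proof (intro conjI)
  show "\<forall>(n::nat) (L::nat) (H::nat) (d::nat) (p::nat) P rnd emb Q K V phi mlp dec.
            prec_scheme p P rnd \<and> weights_in P L H d Q \<and> weights_in P L H d K \<and> weights_in P L H d V \<and>
            real (L * H * d * (d + 1) * p) < real n * log 2 (real n)
            \<longrightarrow> \<not> solves_eva n (lin_model rnd d L H emb Q K V phi mlp dec)"
    using lower_cot[unfolded NT_def] eva_to_cot by blast
  show "\<forall>(n::nat) (L::nat) (H::nat) (d::nat) (p::nat) P rnd emb Q K V phi mlp dec (T::nat) ans.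
            prec_scheme p P rnd \<and> weights_in P L H d Q \<and> weights_in P L H d K \<and> weights_in P L H d V \<and>
            real (L * H * d * (d + 1) * p) < real n * log 2 (real n)
            \<longrightarrow> \<not> solves_eva_cot n (lin_model rnd d L H emb Q K V phi mlp dec) T ans"
    using lower_cot[unfolded NT_def] by blast
qed (rule upper)

end
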